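(* If $A\subset\mathbb{R}^n$ is monovex and $R\subset\mathbb{R}^n$ is an open box whose faces are parallel to the axes, then the Minkowski sum $A+R=\{a+r: a\in A, r\in R\}$ is monovex.
   Context: A set $A \subseteq \mathbb{R}^n$ is monovex if for every $x,y \in A$ there is a continuous path $\gamma:[0,1]\to A$ with $\gamma(0)=x$, $\gamma(1)=y$ and each coordinate $\gamma_i$ monotone (nondecreasing or nonincreasing). An open box with faces parallel to the axes is a set of the form $\times_{i=1}^n(a_i,b_i)$. *)

theory Defs
  imports "HOL-Analysis.Analysis"
begin

definition monovex :: "(real ^ 'n) set \<Rightarrow> bool" where
  "monovex A \<longleftrightarrow>
     (\<forall>x\<in>A. \<forall>y\<in>A. \<exists>\<gamma> :: real \<Rightarrow> real ^ 'n.
        continuous_on {0..1} \<gamma> \<and> \<gamma> ` {0..1} \<subseteq> A \<and>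
        \<gamma> 0 = x \<and> \<gamma> 1 = y \<and>
        (\<forall>i. mono_on {0..1} (\<lambda>t. \<gamma> t $ i) \<or> antimono_on {0..1} (\<lambda>t. \<gamma> t $ i)))"

definition open_box :: "(real ^ 'n) \<Rightarrow> (real ^ 'n) \<Rightarrow> (real ^ 'n) set" where
  "open_box a b = {x. \<forall>i. a $ i < x $ i \<and> x $ i < b $ i}"

end

theory Submission
  imports Defs
begin

lemma antimono_onD2:
  "antimono_on A f \<Longrightarrow> r \<in> A \<Longrightarrow> s \<in> A \<Longrightarrow> r \<le> s \<Longrightarrow> f s \<le> f r"
  by (rule monotone_onD)

lemma key:
  fixes g L :: "real \<Rightarrow> real" and lo hi :: real
  assumes hg: "mono_on {0..1} g \<or> antimono_on {0..1} g"
    and hL: "mono_on {0..1} L \<or> antimono_on {0..1} L"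
    and lo: "lo = min (L 0 - g 0) (L 1 - g 1)"
    and hi: "hi = max (L 0 - g 0) (L 1 - g 1)"
  shows "mono_on {0..1} (\<lambda>t. g t + max lo (min hi (L t - g t))) \<or>
         antimono_on {0..1} (\<lambda>t. g t + max lo (min hi (L t - g t)))"
proof -
  have z: "(0::real) \<in> {0..1}" and o: "(1::real) \<in> {0..1}" by auto
  consider "mono_on {0..1} g" "mono_on {0..1} L" | "antimono_on {0..1} g" "antimono_on {0..1} L"
    | "mono_on {0..1} g" "antimono_on {0..1} L" | "antimono_on {0..1} g" "mono_on {0..1} L"
    using hg hL by blast
  then show ?thesis
  proof cases
    case 1
    have "mono_on {0..1} (\<lambda>t. g t + max lo (min hi (L t - g t)))"
    proof (rule mono_onI)
      fix r s :: real assume "r \<in> {0..1}" "s \<in> {0..1}" "r \<le> s"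
      then have "g r \<le> g s" "L r \<le> L s" using 1 by (auto intro: mono_onD)
      then show "g r + max lo (min hi (L r - g r)) \<le> g s + max lo (min hi (L s - g s))"
        by linarith
    qed
    then show ?thesis ..
  next
    case 2
    have "antimono_on {0..1} (\<lambda>t. g t + max lo (min hi (L t - g t)))"
    proof (rule monotone_onI)
      fix r s :: real assume "r \<in> {0..1}" "s \<in> {0..1}" "r \<le> s"
      then have "g s \<le> g r" "L s \<le> L r" using 2 by (auto intro: antimono_onD2)
      then show "g s + max lo (min hi (L s - g s)) \<le> g r + max lo (min hi (L r - g r))"
        by linarith
    qed
    then show ?thesis ..
  next
    case 3
    have eq: "g t + max lo (min hi (L t - g t)) = L t" if t: "t \<in> {0..1}" for t
    proof -
      have "g 0 \<le> g t" "g t \<le> g 1" using 3 t z o by (auto intro: mono_onD)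
      moreover have "L t \<le> L 0" "L 1 \<le> L t" using 3 t z o by (auto intro: antimono_onD2)
      ultimately show ?thesis using lo hi by linarith
    qed
    have "antimono_on {0..1} (\<lambda>t. g t + max lo (min hi (L t - g t)))"
    proof (rule monotone_onI)
      fix r s :: real assume "r \<in> {0..1}" "s \<in> {0..1}" "r \<le> s"
      then show "g s + max lo (min hi (L s - g s)) \<le> g r + max lo (min hi (L r - g r))"
        using eq 3 by (auto intro: antimono_onD2)
    qed
    then show ?thesis ..
  next
    case 4
    have eq: "g t + max lo (min hi (L t - g t)) = L t" if t: "t \<in> {0..1}" for t
    proof -
      have "g t \<le> g 0" "g 1 \<le> g t" using 4 t z o by (auto intro: antimono_onD2)
      moreover have "L 0 \<le> L t" "L t \<le> L 1" using 4 t z o by (auto intro: mono_onD)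
      ultimately show ?thesis using lo hi by linarith
    qed
    have "mono_on {0..1} (\<lambda>t. g t + max lo (min hi (L t - g t)))"
    proof (rule mono_onI)
      fix r s :: real assume "r \<in> {0..1}" "s \<in> {0..1}" "r \<le> s"
      then show "g r + max lo (min hi (L r - g r)) \<le> g s + max lo (min hi (L s - g s))"
        using eq 4 by (auto intro: mono_onD)
    qed
    then show ?thesis ..
  qed
qed

lemma lin_mono:
  fixes p q :: real
  shows "mono_on {0..1} (\<lambda>t::real. (1 - t) * p + t * q) \<or> antimono_on {0..1} (\<lambda>t::real. (1 - t) * p + t * q)"
proof (cases "p \<le> q")
  case True
  have "mono_on {0..1} (\<lambda>t::real. (1 - t) * p + t * q)"
  proof (rule mono_onI)
    fix r s :: real assume "r \<le> s"
    then have "(s - r) * p \<le> (s - r) * q" using True by (simp add: mult_left_mono)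
    then show "(1 - r) * p + r * q \<le> (1 - s) * p + s * q" by (simp add: algebra_simps)
  qed
  then show ?thesis ..
next
  case False
  have "antimono_on {0..1} (\<lambda>t::real. (1 - t) * p + t * q)"
  proof (rule monotone_onI)
    fix r s :: real assume "r \<le> s"
    then have "(s - r) * q \<le> (s - r) * p" using False by (simp add: mult_left_mono)
    then show "(1 - s) * p + s * q \<le> (1 - r) * p + r * q" by (simp add: algebra_simps)
  qed
  then show ?thesis ..
qed

theorem lemma2:
  fixes A :: "(real ^ 'n) set" and a b :: "real ^ 'n"
  assumes "monovex A"
  shows "monovex {x + r | x r. x \<in> A \<and> r \<in> open_box a b}"
  unfolding monovex_def
proof (intro ballI)
  fix P Q assume "P \<in> {x + r | x r. x \<in> A \<and> r \<in> open_box a b}"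
    "Q \<in> {x + r | x r. x \<in> A \<and> r \<in> open_box a b}"
  obtain x r where xr: "x \<in> A" "r \<in> open_box a b" "P = x + r"
    using \<open>P \<in> _\<close> by (auto simp only: mem_Collect_eq)
  obtain y s where ys: "y \<in> A" "s \<in> open_box a b" "Q = y + s"
    using \<open>Q \<in> _\<close> by (auto simp only: mem_Collect_eq)
  have "\<exists>g :: real \<Rightarrow> real ^ 'n. continuous_on {0..1} g \<and> g ` {0..1} \<subseteq> A \<and> g 0 = x \<and> g 1 = y \<and>
    (\<forall>i. mono_on {0..1} (\<lambda>t. g t $ i) \<or> antimono_on {0..1} (\<lambda>t. g t $ i))"
    using assms xr(1) ys(1) unfolding monovex_def by (simp only: Ball_def)
  then obtain g :: "real \<Rightarrow> real ^ 'n" where g0: "continuous_on {0..1} g" "g ` {0..1} \<subseteq> A" "g 0 = x" "g 1 = y"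
    "\<forall>i. mono_on {0..1} (\<lambda>t. g t $ i) \<or> antimono_on {0..1} (\<lambda>t. g t $ i)"
    by (elim exE conjE) (intro that)
  have g5: "mono_on {0..1} (\<lambda>t. g t $ i) \<or> antimono_on {0..1} (\<lambda>t. g t $ i)" for i
    using g0(5) by (rule spec)
  note g = g0(1-4) g5
  define lo where "lo = (\<chi> i. min (r $ i) (s $ i))"
  define hi where "hi = (\<chi> i. max (r $ i) (s $ i))"
  define L where "L = (\<lambda>t::real. \<chi> i. (1 - t) * P $ i + t * Q $ i)"
  define \<rho> where "\<rho> = (\<lambda>t. \<chi> i. max (lo $ i) (min (hi $ i) (L t $ i - g t $ i)))"
  define \<delta> where "\<delta> = (\<lambda>t. g t + \<rho> t)"
  have c: "continuous_on {0..1} \<delta>"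
    unfolding \<delta>_def \<rho>_def L_def
    by (intro continuous_on_add g(1) continuous_on_vec_lambda continuous_on_max continuous_on_min continuous_on_const continuous_on_diff continuous_on_component continuous_on_mult continuous_on_id)
  have rb: "\<rho> t \<in> open_box a b" for t
    unfolding open_box_def
  proof (intro CollectI allI)
    fix i
    have "a $ i < r $ i" "r $ i < b $ i" "a $ i < s $ i" "s $ i < b $ i"
      using xr(2) ys(2) unfolding open_box_def by auto
    moreover have "\<rho> t $ i = max (min (r $ i) (s $ i)) (min (max (r $ i) (s $ i)) (L t $ i - g t $ i))"
      unfolding \<rho>_def lo_def hi_def by simp
    ultimately show "a $ i < \<rho> t $ i \<and> \<rho> t $ i < b $ i" by linarith
  qed
  have im: "\<delta> ` {0..1} \<subseteq> {x + r | x r. x \<in> A \<and> r \<in> open_box a b}"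
  proof (rule image_subsetI)
    fix t :: real assume "t \<in> {0..1}"
    then have "g t \<in> A" using g(2) by (meson image_subset_iff)
    then show "\<delta> t \<in> {x + r | x r. x \<in> A \<and> r \<in> open_box a b}"
      unfolding \<delta>_def using rb[of t] by (intro CollectI exI conjI refl) (rule refl)
  qed
  have d0: "\<delta> 0 = P"
    unfolding \<delta>_def \<rho>_def L_def lo_def hi_def vec_eq_iff using g(3) xr(3) by simp
  have d1: "\<delta> 1 = Q"
    unfolding \<delta>_def \<rho>_def L_def lo_def hi_def vec_eq_iff using g(4) ys(3) by simp
  have m: "mono_on {0..1} (\<lambda>t. \<delta> t $ i) \<or> antimono_on {0..1} (\<lambda>t. \<delta> t $ i)" for i
  proof -
    have e: "(\<lambda>t. \<delta> t $ i) = (\<lambda>t. g t $ i + max (lo $ i) (min (hi $ i) ((\<lambda>t. L t $ i) t - g t $ i)))"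
      unfolding \<delta>_def \<rho>_def by simp
    have "lo $ i = min ((\<lambda>t. L t $ i) 0 - g 0 $ i) ((\<lambda>t. L t $ i) 1 - g 1 $ i)"
      "hi $ i = max ((\<lambda>t. L t $ i) 0 - g 0 $ i) ((\<lambda>t. L t $ i) 1 - g 1 $ i)"
      unfolding lo_def hi_def L_def using g(3,4) xr(3) ys(3) by simp_all
    moreover have "mono_on {0..1} (\<lambda>t. L t $ i) \<or> antimono_on {0..1} (\<lambda>t. L t $ i)"
      unfolding L_def using lin_mono by simp
    ultimately show ?thesis unfolding e using key[OF g(5)] by blast
  qed
  show "\<exists>\<gamma> :: real \<Rightarrow> real ^ 'n. continuous_on {0..1} \<gamma> \<and> \<gamma> ` {0..1} \<subseteq> {x + r | x r. x \<in> A \<and> r \<in> open_box a b} \<and>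
        \<gamma> 0 = P \<and> \<gamma> 1 = Q \<and> (\<forall>i. mono_on {0..1} (\<lambda>t. \<gamma> t $ i) \<or> antimono_on {0..1} (\<lambda>t. \<gamma> t $ i))"
    apply (rule exI[of _ \<delta>])
    apply (intro conjI allI c im d0 d1)
    apply (rule m)
    done
qed

end
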